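(* Let $Z$ be a densely defined closed linear operator in a complex separable Hilbert space $\mathcal{H}$ such that $\operatorname{Dom}(Z)\subset\operatorname{Dom}(Z^* )$, and let $\lambda$ be a boundary eigenvalue of $Z$. Then $$\ker(\lambda-Z)\subset\ker(\overline{\lambda}-Z^* ),$$ i.e. if $f\in\operatorname{Dom}(Z)$ and $Zf=\lambda f$, then $Z^*f=\overline{\lambda}f$. If moreover $\operatorname{Dom}(Z)=\operatorname{Dom}(Z^* )$, then $\ker(\lambda-Z)=\ker(\overline{\lambda}-Z^* )$, i.e. $\lambda$ is a normal eigenvalue of $Z$.
   Context: The numerical range of an operator $Z$ in a Hilbert space $(\mathcal{H},\langle\cdot,\cdot\rangle)$ is $\operatorname{Num}(Z)=\{\langle Zf,f\rangle: f\in\operatorname{Dom}(Z),\ \|f\|=1\}$; it is a convex subset of $\mathbb{C}$. A boundary eigenvalue of $Z$ is an eigenvalue of $Z$ that lies in the topological boundary $\partial(\operatorname{Num}(Z))$ of the numerical range. An eigenvalue $\lambda$ of $Z$ is called normal if $\ker(\lambda-Z)=\ker(\overline{\lambda}-Z^* )$. *)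

theory Defs
  imports "HOL-Analysis.Analysis"
begin

text \<open>The inner product is linear in the first argument and conjugate linear
in the second, matching the numerical range convention (Z f, f).\<close>

class complex_inner_space = ab_group_add +
  fixes cscale :: "complex \<Rightarrow> 'a \<Rightarrow> 'a"
    and cinner :: "'a \<Rightarrow> 'a \<Rightarrow> complex"
  assumes cscale_add_right: "cscale a (x + y) = cscale a x + cscale a y"
    and cscale_add_left: "cscale (a + b) x = cscale a x + cscale b x"
    and cscale_cscale: "cscale a (cscale b x) = cscale (a * b) x"
    and cscale_one: "cscale 1 x = x"
    and cinner_add_left: "cinner (x + y) z = cinner x z + cinner y z"
    and cinner_cscale_left: "cinner (cscale a x) y = a * cinner x y"
    and cinner_commute: "cinner y x = cnj (cinner x y)"
    and cinner_nonneg: "0 \<le> Re (cinner x x)"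
    and cinner_eq_zero_iff: "cinner x x = 0 \<longleftrightarrow> x = 0"

definition cnorm :: "'a::complex_inner_space \<Rightarrow> real" where
  "cnorm x = sqrt (Re (cinner x x))"

class separable_chilbert = complex_inner_space +
  assumes chilbert_complete:
    "\<And>X :: nat \<Rightarrow> 'a. (\<forall>e>0. \<exists>N. \<forall>m\<ge>N. \<forall>n\<ge>N. sqrt (Re (cinner (X m - X n) (X m - X n))) < e)
       \<Longrightarrow> (\<exists>L. \<forall>e>0. \<exists>N. \<forall>n\<ge>N. sqrt (Re (cinner (X n - L) (X n - L))) < e)"
    and chilbert_separable:
    "\<exists>S. countable S \<and> (\<forall>x. \<forall>e>0. \<exists>s\<in>S. sqrt (Re (cinner (x - s) (x - s))) < e)"

definition cconverges :: "(nat \<Rightarrow> 'a::complex_inner_space) \<Rightarrow> 'a \<Rightarrow> bool" where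
  "cconverges X L \<longleftrightarrow> (\<lambda>n. cnorm (X n - L)) \<longlonglongrightarrow> 0"

definition linear_operator :: "'a::complex_inner_space set \<Rightarrow> ('a \<Rightarrow> 'a) \<Rightarrow> bool" where
  "linear_operator D Z \<longleftrightarrow>
     0 \<in> D \<and> (\<forall>x\<in>D. \<forall>y\<in>D. x + y \<in> D) \<and> (\<forall>a. \<forall>x\<in>D. cscale a x \<in> D) \<and>
     (\<forall>x\<in>D. \<forall>y\<in>D. Z (x + y) = Z x + Z y) \<and> (\<forall>a. \<forall>x\<in>D. Z (cscale a x) = cscale a (Z x))"

definition densely_defined :: "'a::complex_inner_space set \<Rightarrow> ('a \<Rightarrow> 'a) \<Rightarrow> bool" where
  "densely_defined D Z \<longleftrightarrow>
     linear_operator D Z \<and> (\<forall>x. \<forall>e>0. \<exists>d\<in>D. cnorm (x - d) < e)"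

definition closed_operator :: "'a::complex_inner_space set \<Rightarrow> ('a \<Rightarrow> 'a) \<Rightarrow> bool" where
  "closed_operator D Z \<longleftrightarrow>
     (\<forall>X x y. (\<forall>n. X n \<in> D) \<and> cconverges X x \<and> cconverges (\<lambda>n. Z (X n)) y
        \<longrightarrow> x \<in> D \<and> Z x = y)"

definition adj_dom :: "'a::complex_inner_space set \<Rightarrow> ('a \<Rightarrow> 'a) \<Rightarrow> 'a set" where
  "adj_dom D Z = {g. \<exists>h. \<forall>f\<in>D. cinner (Z f) g = cinner f h}"

definition adj :: "'a::complex_inner_space set \<Rightarrow> ('a \<Rightarrow> 'a) \<Rightarrow> 'a \<Rightarrow> 'a" where
  "adj D Z g = (THE h. \<forall>f\<in>D. cinner (Z f) g = cinner f h)"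

definition num_range :: "'a::complex_inner_space set \<Rightarrow> ('a \<Rightarrow> 'a) \<Rightarrow> complex set" where
  "num_range D Z = {cinner (Z f) f | f. f \<in> D \<and> cnorm f = 1}"

definition kernel_shift :: "'a::complex_inner_space set \<Rightarrow> ('a \<Rightarrow> 'a) \<Rightarrow> complex \<Rightarrow> 'a set" where
  "kernel_shift D Z lam = {f \<in> D. Z f = cscale lam f}"

definition eigenvalue :: "'a::complex_inner_space set \<Rightarrow> ('a \<Rightarrow> 'a) \<Rightarrow> complex \<Rightarrow> bool" where
  "eigenvalue D Z lam \<longleftrightarrow> (\<exists>f\<in>D. f \<noteq> 0 \<and> Z f = cscale lam f)"

definition boundary_eigenvalue :: "'a::complex_inner_space set \<Rightarrow> ('a \<Rightarrow> 'a) \<Rightarrow> complex \<Rightarrow> bool" where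
  "boundary_eigenvalue D Z lam \<longleftrightarrow> eigenvalue D Z lam \<and> lam \<in> frontier (num_range D Z)"

definition normal_eigenvalue :: "'a::complex_inner_space set \<Rightarrow> ('a \<Rightarrow> 'a) \<Rightarrow> complex \<Rightarrow> bool" where
  "normal_eigenvalue D Z lam \<longleftrightarrow> eigenvalue D Z lam \<and>
     kernel_shift D Z lam = kernel_shift (adj_dom D Z) (adj D Z) (cnj lam)"

end

theory Submission
  imports Defs
begin
lemma cscale_zero_right[simp]: "cscale a (0::'a::complex_inner_space) = 0"
  using cscale_add_right[of a "0::'a" 0] by simp

lemma cscale_zero_left[simp]: "cscale 0 (x::'a::complex_inner_space) = 0"
  using cscale_add_left[of 0 0 x] by simp

lemma cscale_minus_right: "cscale a (- x) = - cscale a (x::'a::complex_inner_space)"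
proof -
  have "cscale a x + cscale a (- x) = 0" using cscale_add_right[of a x "-x"] by simp
  then show ?thesis by (metis minus_unique)
qed

lemma cscale_diff_right: "cscale a (x - y) = cscale a x - cscale a (y::'a::complex_inner_space)"
  by (simp only: diff_conv_add_uminus cscale_add_right cscale_minus_right)

lemma cscale_minus_left: "cscale (- a) x = - cscale a (x::'a::complex_inner_space)"
proof -
  have "cscale a x + cscale (-a) x = 0" using cscale_add_left[of a "-a" x] by simp
  then show ?thesis by (metis minus_unique)
qed

lemma cinner_zero_left[simp]: "cinner (0::'a::complex_inner_space) y = 0"
  using cinner_add_left[of "0::'a" 0 y] by simp

lemma cinner_zero_right[simp]: "cinner x (0::'a::complex_inner_space) = 0"
  using cinner_commute[of "0::'a" x] by simp

lemma cinner_minus_left: "cinner (- x) y = - cinner (x::'a::complex_inner_space) y"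
proof -
  have "cinner x y + cinner (- x) y = 0" using cinner_add_left[of x "-x" y] by simp
  then show ?thesis by (metis minus_unique)
qed

lemma cinner_diff_left: "cinner (x - y) z = cinner x z - cinner (y::'a::complex_inner_space) z"
  unfolding diff_conv_add_uminus cinner_add_left cinner_minus_left by (rule refl)

lemma cinner_add_right: "cinner x (y + z) = cinner x y + cinner (x::'a::complex_inner_space) z"
  by (metis cinner_commute cinner_add_left complex_cnj_add)

lemma cinner_cscale_right: "cinner x (cscale a y) = cnj a * cinner (x::'a::complex_inner_space) y"
  by (metis cinner_commute cinner_cscale_left complex_cnj_mult complex_cnj_cnj)

lemma cinner_minus_right: "cinner x (- y) = - cinner (x::'a::complex_inner_space) y"
  by (metis cinner_commute cinner_minus_left complex_cnj_minus)

lemma cinner_diff_right: "cinner x (y - z) = cinner x y - cinner (x::'a::complex_inner_space) z"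
  unfolding diff_conv_add_uminus cinner_add_right cinner_minus_right by (rule refl)

lemma cinner_self_real: "cinner x x = complex_of_real (Re (cinner (x::'a::complex_inner_space) x))"
proof -
  have "cnj (cinner x x) = cinner x x" using cinner_commute[of x x] by simp
  then have "Im (cinner x x) = 0" by (metis Reals_cnj_iff complex_is_Real_iff)
  then show ?thesis by (simp add: complex_eq_iff)
qed
lemma solve_eq:
  fixes a b :: complex and m n :: real
  assumes a: "a \<noteq> 0" and m: "m > 0" and n: "n \<ge> 0"
  shows "\<exists>e>0. \<forall>w. cmod w < e \<longrightarrow>
     (\<exists>z. z * a + complex_of_real ((cmod z)\<^sup>2) * b = w * complex_of_real (m + (cmod z)\<^sup>2 * n))"
proof -
  define e where "e = min 1 ((cmod a)\<^sup>2 / (9 * m * (n + cmod b + 1)))"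
  have ca: "cmod a > 0" using a by simp
  have e0: "e > 0" unfolding e_def using ca m n by (simp add: add_nonneg_pos)
  have "\<exists>z. z * a + complex_of_real ((cmod z)\<^sup>2) * b = w * complex_of_real (m + (cmod z)\<^sup>2 * n)"
    if w: "cmod w < e" for w
  proof -
    define F where "F = (\<lambda>s::real. (cmod (w * complex_of_real (m + s * n) - complex_of_real s * b))\<^sup>2 - s * (cmod a)\<^sup>2)"
    define s1 where "s1 = 9 * m\<^sup>2 * (cmod w)\<^sup>2 / (cmod a)\<^sup>2"
    have w1: "cmod w \<le> 1" using w unfolding e_def by simp
    have wb: "cmod w * (9 * m * (n + cmod b + 1)) \<le> (cmod a)\<^sup>2"
    proof -
      have p: "9 * m * (n + cmod b + 1) > 0" using m n by (simp add: add_nonneg_pos)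
      have "cmod w < (cmod a)\<^sup>2 / (9 * m * (n + cmod b + 1))" using w unfolding e_def by simp
      then show ?thesis using p by (simp add: pos_less_divide_eq less_imp_le)
    qed
    have s10: "s1 \<ge> 0" unfolding s1_def by simp
    have ww: "(cmod w)\<^sup>2 \<le> cmod w" using w1 mult_left_mono[OF w1, of "cmod w"] by (simp add: power2_eq_square)
    have "s1 * n \<le> m"
    proof -
      have "s1 * n = m * ((cmod w)\<^sup>2 * (9 * m * n)) / (cmod a)\<^sup>2" unfolding s1_def
        by (simp add: power2_eq_square field_simps)
      also have "\<dots> \<le> m * (cmod w * (9 * m * (n + cmod b + 1))) / (cmod a)\<^sup>2"
        apply (rule divide_right_mono, rule mult_left_mono)
        using ww m n mult_mono[OF ww, of "9*m*n" "9 * m * (n + cmod b + 1)"] by auto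
      also have "\<dots> \<le> m * (cmod a)\<^sup>2 / (cmod a)\<^sup>2"
        using m by (intro divide_right_mono mult_left_mono wb) auto
      finally show ?thesis using ca by simp
    qed
    moreover have "s1 * cmod b \<le> m * cmod w"
    proof -
      have "s1 * cmod b = m * cmod w * (cmod w * (9 * m * cmod b)) / (cmod a)\<^sup>2" unfolding s1_def
        by (simp add: power2_eq_square field_simps)
      also have "\<dots> \<le> m * cmod w * (cmod w * (9 * m * (n + cmod b + 1))) / (cmod a)\<^sup>2"
        apply (rule divide_right_mono, rule mult_left_mono)
        using m n by (auto intro!: mult_left_mono simp: algebra_simps)
      also have "\<dots> \<le> m * cmod w * (cmod a)\<^sup>2 / (cmod a)\<^sup>2"
        using m by (intro divide_right_mono mult_left_mono wb) auto
      finally show ?thesis using ca by simp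
    qed
    ultimately have "cmod (w * complex_of_real (m + s1 * n) - complex_of_real s1 * b) \<le> 3 * m * cmod w"
    proof -
      assume A: "s1 * n \<le> m" "s1 * cmod b \<le> m * cmod w"
      have "cmod (w * complex_of_real (m + s1 * n) - complex_of_real s1 * b)
          \<le> cmod w * (m + s1 * n) + s1 * cmod b"
        using norm_triangle_ineq4[of "w * complex_of_real (m + s1 * n)" "complex_of_real s1 * b"]
          m n s10 by (simp only: norm_mult norm_of_real abs_of_nonneg[of "m + s1 * n"] abs_of_nonneg[of s1]) (simp add: add_nonneg_nonneg)
      also have "\<dots> \<le> cmod w * (2 * m) + m * cmod w"
        using A by (intro add_mono mult_left_mono) auto
      finally show ?thesis by simp
    qed
    then have "F s1 \<le> 0" unfolding F_def
    proof -
      assume B: "cmod (w * complex_of_real (m + s1 * n) - complex_of_real s1 * b) \<le> 3 * m * cmod w"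
      have "(cmod (w * complex_of_real (m + s1 * n) - complex_of_real s1 * b))\<^sup>2 \<le> (3 * m * cmod w)\<^sup>2"
        using B by (intro power_mono) auto
      also have "\<dots> = s1 * (cmod a)\<^sup>2" unfolding s1_def using ca by (simp add: power2_eq_square field_simps)
      finally show "(cmod (w * complex_of_real (m + s1 * n) - complex_of_real s1 * b))\<^sup>2 - s1 * (cmod a)\<^sup>2 \<le> 0" by simp
    qed
    moreover have "0 \<le> F 0" unfolding F_def by simp
    moreover have "continuous_on {0..s1} F" unfolding F_def by (intro continuous_intros)
    ultimately obtain s where s: "0 \<le> s" "s \<le> s1" "F s = 0"
      using IVT2'[of F s1 0 0] s10 by auto
    define z where "z = (w * complex_of_real (m + s * n) - complex_of_real s * b) / a"
    have "(cmod z)\<^sup>2 = (cmod (w * complex_of_real (m + s * n) - complex_of_real s * b))\<^sup>2 / (cmod a)\<^sup>2"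
      unfolding z_def by (simp add: norm_divide power_divide)
    also have "\<dots> = s" using s(3) ca unfolding F_def by (simp add: field_simps)
    finally have zs: "(cmod z)\<^sup>2 = s" .
    have "z * a = w * complex_of_real (m + s * n) - complex_of_real s * b" unfolding z_def using a by simp
    then show ?thesis using zs by (intro exI[of _ z]) (simp add: algebra_simps)
  qed
  then show ?thesis using e0 by blast
qed

lemma cinner_self_pos:
  fixes x :: "'a::complex_inner_space"
  assumes "x \<noteq> 0" shows "Re (cinner x x) > 0"
proof -
  have "cinner x x \<noteq> 0" using assms cinner_eq_zero_iff by blast
  then have "Re (cinner x x) \<noteq> 0" using cinner_self_real[of x] by (metis of_real_0)
  then show ?thesis using cinner_nonneg[of x] by linarith
qed

lemma normalize_vec:
  fixes D :: "'a::complex_inner_space set"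
  assumes lin: "linear_operator D S" and x: "x \<in> D" "x \<noteq> 0"
    and eq: "cinner (S x) x = k * cinner x x"
  shows "\<exists>y\<in>D. cnorm y = 1 \<and> cinner (S y) y = k"
proof -
  define r where "r = Re (cinner x x)"
  have r0: "r > 0" unfolding r_def using cinner_self_pos x(2) by blast
  have xx: "cinner x x = complex_of_real r" unfolding r_def by (rule cinner_self_real)
  define c where "c = complex_of_real (1 / sqrt r)"
  have cc: "c * cnj c = complex_of_real (1 / r)"
  proof -
    have "c * cnj c = complex_of_real ((1 / sqrt r) * (1 / sqrt r))" 
      by (simp only: c_def complex_cnj_complex_of_real of_real_mult)
    also have "(1 / sqrt r) * (1 / sqrt r) = 1 / r"
    proof -
      have "sqrt r * sqrt r = r" using r0 by simp
      then show ?thesis by (simp only: times_divide_times_eq mult_1)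
    qed
    finally show ?thesis .
  qed
  define y where "y = cscale c x"
  have yD: "y \<in> D" using lin x unfolding linear_operator_def y_def by blast
  have Sy: "S y = cscale c (S x)" using lin x unfolding linear_operator_def y_def by blast
  have yy: "cinner y y = (c * cnj c) * cinner x x" unfolding y_def
    by (simp add: cinner_cscale_left cinner_cscale_right mult.assoc)
  have "cinner y y = 1" using yy cc xx r0 by (simp flip: of_real_mult)
  then have n1: "cnorm y = 1" unfolding cnorm_def by simp
  have "cinner (S y) y = (c * cnj c) * cinner (S x) x" unfolding Sy unfolding y_def
    by (simp add: cinner_cscale_left cinner_cscale_right mult.assoc)
  also have "\<dots> = k" using eq cc xx r0 by (simp flip: of_real_mult)
  finally show ?thesis using yD n1 by blast
qed

lemma dense_unique:
  fixes D :: "'a::complex_inner_space set"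
  assumes dd: "densely_defined D Z" and h: "\<forall>u\<in>D. cinner u h1 = cinner u h2"
  shows "h1 = h2"
proof (rule ccontr)
  assume ne: "h1 \<noteq> h2"
  define d where "d = h1 - h2"
  have d0: "d \<noteq> 0" using ne unfolding d_def by simp
  have ud: "cinner u d = 0" if "u \<in> D" for u
    using h that unfolding d_def by (simp add: cinner_diff_right)
  have pos: "cnorm d > 0" unfolding cnorm_def using cinner_self_pos[OF d0] by simp
  then obtain u where u: "u \<in> D" "cnorm (d - u) < cnorm d"
    using dd unfolding densely_defined_def by blast
  have du: "cinner d u = 0" using ud[OF u(1)] cinner_commute[of u d] by simp
  have "cinner (d - u) (d - u) = cinner d d + cinner u u"
    using ud[OF u(1)] du by (simp add: cinner_diff_left cinner_diff_right)
  then have "Re (cinner (d - u) (d - u)) \<ge> Re (cinner d d)"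
    using cinner_nonneg[of u] by simp
  then have "cnorm (d - u) \<ge> cnorm d" unfolding cnorm_def by (rule real_sqrt_le_mono)
  then show False using u(2) by simp
qed

lemma adj_rel:
  fixes D :: "'a::complex_inner_space set"
  assumes dd: "densely_defined D Z" and g: "g \<in> adj_dom D Z" and u: "u \<in> D"
  shows "cinner (Z u) g = cinner u (adj D Z g)"
proof -
  obtain h where h: "\<forall>f\<in>D. cinner (Z f) g = cinner f h" using g unfolding adj_dom_def by blast
  have "\<exists>!h. \<forall>f\<in>D. cinner (Z f) g = cinner f h"
    using h dense_unique[OF dd] by (metis (no_types, lifting))
  then have "\<forall>f\<in>D. cinner (Z f) g = cinner f (adj D Z g)"
    unfolding adj_def by (rule theI')
  then show ?thesis using u by blast
qed

lemma adj_eq: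
  fixes D :: "'a::complex_inner_space set"
  assumes dd: "densely_defined D Z" and h: "\<forall>u\<in>D. cinner (Z u) g = cinner u h"
  shows "g \<in> adj_dom D Z \<and> adj D Z g = h"
proof
  show g: "g \<in> adj_dom D Z" using h unfolding adj_dom_def by blast
  show "adj D Z g = h"
    using adj_rel[OF dd g] h dense_unique[OF dd, of "adj D Z g" h] by simp
qed
lemma key_ball:
  fixes D :: "'a::complex_inner_space set"
  assumes lin: "linear_operator D S" and f: "f \<in> D" "f \<noteq> 0" "S f = cscale \<mu> f"
    and u: "u \<in> D" and ne: "cinner (S u) f \<noteq> \<mu> * cinner u f"
  shows "\<exists>e>0. \<forall>w. cmod w < e \<longrightarrow> (\<exists>y\<in>D. cnorm y = 1 \<and> cinner (S y) y = \<mu> + w)"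
proof -
  define m where "m = Re (cinner f f)"
  have m0: "m > 0" unfolding m_def using cinner_self_pos f(2) by blast
  have ff: "cinner f f = complex_of_real m" unfolding m_def by (rule cinner_self_real)
  have ff0: "cinner f f \<noteq> 0" using ff m0 by simp
  define c where "c = cinner u f / cinner f f"
  define v where "v = u + cscale (- c) f"
  have vD: "v \<in> D" using lin u f unfolding linear_operator_def v_def by blast
  have L: "\<And>x y. x \<in> D \<Longrightarrow> y \<in> D \<Longrightarrow> S (x + y) = S x + S y"
    "\<And>a x. x \<in> D \<Longrightarrow> S (cscale a x) = cscale a (S x)"
    "\<And>a x. x \<in> D \<Longrightarrow> cscale a x \<in> D"
    using lin unfolding linear_operator_def by blast+
  have Sv: "S v = S u + cscale (- c) (S f)" unfolding v_def using L u f(1) by metis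
  have vf: "cinner v f = 0" unfolding v_def c_def using ff0
    by (simp add: cinner_add_left cinner_cscale_left)
  have fv: "cinner f v = 0" using vf cinner_commute[of f v] by simp
  define t where "t = S v - cscale \<mu> v"
  define a where "a = cinner t f"
  have "a = cinner (S u) f - \<mu> * cinner u f"
    unfolding a_def t_def Sv f(3) using vf
    by (simp add: cinner_add_left cinner_diff_left cinner_cscale_left c_def ff0)
  then have a0: "a \<noteq> 0" using ne by simp
  define b where "b = cinner t v"
  define n where "n = Re (cinner v v)"
  have n0: "n \<ge> 0" unfolding n_def by (rule cinner_nonneg)
  have vv: "cinner v v = complex_of_real n" unfolding n_def by (rule cinner_self_real)
  obtain e where e0: "e > 0" and e: "\<And>w. cmod w < e \<Longrightarrow>
     (\<exists>z. z * a + complex_of_real ((cmod z)\<^sup>2) * b = w * complex_of_real (m + (cmod z)\<^sup>2 * n))"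
    using solve_eq[OF a0 m0 n0, of b] by blast
  have "\<exists>y\<in>D. cnorm y = 1 \<and> cinner (S y) y = \<mu> + w" if w: "cmod w < e" for w
  proof -
    obtain z where z: "z * a + complex_of_real ((cmod z)\<^sup>2) * b = w * complex_of_real (m + (cmod z)\<^sup>2 * n)"
      using e[OF w] by blast
    have zz: "z * cnj z = complex_of_real ((cmod z)\<^sup>2)" by (rule complex_norm_square[symmetric])
    define x where "x = f + cscale z v"
    have xD: "x \<in> D" using lin vD f unfolding linear_operator_def x_def by blast
    have Sx: "S x = S f + cscale z (S v)" unfolding x_def using L vD f(1) by metis
    have sw: "cscale \<mu> (cscale z v) = cscale z (cscale \<mu> v)" by (simp add: cscale_cscale mult.commute)
    have tx: "S x - cscale \<mu> x = cscale z t"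
      unfolding Sx unfolding f(3) t_def x_def cscale_diff_right cscale_add_right sw by (simp add: algebra_simps)
    have xx: "cinner x x = complex_of_real (m + (cmod z)\<^sup>2 * n)"
    proof -
      have "cinner x x = cinner f f + cnj z * cinner f v + z * (cinner v f + cnj z * cinner v v)"
        unfolding x_def by (simp add: cinner_add_left cinner_add_right cinner_cscale_left cinner_cscale_right algebra_simps)
      also have "\<dots> = complex_of_real m + (z * cnj z) * complex_of_real n"
        using ff fv vf vv by (simp add: algebra_simps)
      finally show ?thesis unfolding zz by simp
    qed
    have "cinner (S x) x = cinner (S x - cscale \<mu> x) x + \<mu> * cinner x x"
      by (simp add: cinner_diff_left cinner_cscale_left)
    also have "cinner (S x - cscale \<mu> x) x = z * a + (z * cnj z) * b"
      unfolding tx unfolding x_def a_def b_def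
      by (simp add: cinner_add_right cinner_cscale_left cinner_cscale_right algebra_simps)
    finally have "cinner (S x) x = (\<mu> + w) * cinner x x"
      unfolding zz using z xx by (simp add: algebra_simps)
    moreover have "x \<noteq> 0"
    proof
      assume "x = 0"
      then have "cinner x x = 0" by simp
      then have "complex_of_real (m + (cmod z)\<^sup>2 * n) = 0" using xx by metis
      then have "m + (cmod z)\<^sup>2 * n = 0" by (simp only: of_real_eq_0_iff)
      moreover have "(cmod z)\<^sup>2 * n \<ge> 0" using n0 by simp
      ultimately show False using m0 by linarith
    qed
    ultimately show ?thesis using normalize_vec[OF lin xD] by blast
  qed
  then show ?thesis using e0 by blast
qed
lemma not_ball_in_range:
  assumes fr: "lam \<in> frontier W" and e: "e > 0" and h: "\<forall>w. cmod w < e \<longrightarrow> lam + w \<in> W"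
  shows False
proof -
  have "ball lam e \<subseteq> W"
  proof
    fix y assume "y \<in> ball lam e"
    then have "cmod (y - lam) < e" by (simp add: dist_norm norm_minus_commute)
    then have "lam + (y - lam) \<in> W" using h by blast
    then show "y \<in> W" by simp
  qed
  then have "lam \<in> interior W" using e mem_interior by blast
  then show False using fr by (simp add: frontier_def)
qed

theorem mainTheorem1:
  fixes D :: "'a::separable_chilbert set" and Z :: "'a \<Rightarrow> 'a" and lam :: complex
  assumes "densely_defined D Z"
    and "closed_operator D Z"
    and "D \<subseteq> adj_dom D Z"
    and "boundary_eigenvalue D Z lam"
  shows "kernel_shift D Z lam \<subseteq> kernel_shift (adj_dom D Z) (adj D Z) (cnj lam)
         \<and> (D = adj_dom D Z \<longrightarrow> normal_eigenvalue D Z lam)"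
proof -
  have dd: "densely_defined D Z" using assms(1) .
  have lin: "linear_operator D Z" using dd unfolding densely_defined_def by blast
  have fr: "lam \<in> frontier (num_range D Z)" and eig: "eigenvalue D Z lam"
    using assms(4) unfolding boundary_eigenvalue_def by blast+
  have inW: "lam + w \<in> num_range D Z" if "y \<in> D" "cnorm y = 1" "cinner (Z y) y = lam + w" for y w
    using that unfolding num_range_def by force
  have part1: "kernel_shift D Z lam \<subseteq> kernel_shift (adj_dom D Z) (adj D Z) (cnj lam)"
  proof
    fix f assume "f \<in> kernel_shift D Z lam"
    then have fD: "f \<in> D" and Zf: "Z f = cscale lam f" unfolding kernel_shift_def by blast+
    have rel: "\<forall>u\<in>D. cinner (Z u) f = cinner u (cscale (cnj lam) f)"
    proof (cases "f = 0")
      case True then show ?thesis by simp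
    next
      case False
      show ?thesis
      proof (rule ccontr)
        assume "\<not> ?thesis"
        then obtain u where u: "u \<in> D" "cinner (Z u) f \<noteq> lam * cinner u f"
          by (auto simp: cinner_cscale_right)
        obtain e where e: "e > 0" "\<forall>w. cmod w < e \<longrightarrow> (\<exists>y\<in>D. cnorm y = 1 \<and> cinner (Z y) y = lam + w)"
          using key_ball[OF lin fD False Zf u] by blast
        have "\<forall>w. cmod w < e \<longrightarrow> lam + w \<in> num_range D Z" using e(2) inW by blast
        then show False using not_ball_in_range[OF fr e(1)] by blast
      qed
    qed
    show "f \<in> kernel_shift (adj_dom D Z) (adj D Z) (cnj lam)"
      using adj_eq[OF dd rel] unfolding kernel_shift_def by blast
  qed
  have part2: "normal_eigenvalue D Z lam" if DA: "D = adj_dom D Z"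
  proof -
    define A where "A = adj D Z"
    have rel: "\<And>u g. u \<in> D \<Longrightarrow> g \<in> D \<Longrightarrow> cinner (Z u) g = cinner u (A g)"
      unfolding A_def using adj_rel[OF dd] DA by blast
    have L: "0 \<in> D" "\<And>x y. x \<in> D \<Longrightarrow> y \<in> D \<Longrightarrow> x + y \<in> D"
      "\<And>a x. x \<in> D \<Longrightarrow> cscale a x \<in> D"
      using lin unfolding linear_operator_def by blast+
    have Aadd: "A (x + y) = A x + A y" if "x \<in> D" "y \<in> D" for x y
    proof (rule dense_unique[OF dd], intro ballI)
      fix u assume u: "u \<in> D"
      have "cinner u (A (x + y)) = cinner (Z u) (x + y)" using rel[OF u L(2)[OF that]] by simp
      also have "\<dots> = cinner u (A x + A y)"
        using rel[OF u that(1)] rel[OF u that(2)] by (simp add: cinner_add_right)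
      finally show "cinner u (A (x + y)) = cinner u (A x + A y)" .
    qed
    have Ascale: "A (cscale a x) = cscale a (A x)" if "x \<in> D" for a x
    proof (rule dense_unique[OF dd], intro ballI)
      fix u assume u: "u \<in> D"
      have "cinner u (A (cscale a x)) = cinner (Z u) (cscale a x)" using rel[OF u L(3)[OF that]] by simp
      also have "\<dots> = cinner u (cscale a (A x))"
        using rel[OF u that] by (simp add: cinner_cscale_right)
      finally show "cinner u (A (cscale a x)) = cinner u (cscale a (A x))" .
    qed
    have linA: "linear_operator D A"
      unfolding linear_operator_def using L Aadd Ascale by blast
    have sup: "kernel_shift (adj_dom D Z) (adj D Z) (cnj lam) \<subseteq> kernel_shift D Z lam"
    proof
      fix g assume "g \<in> kernel_shift (adj_dom D Z) (adj D Z) (cnj lam)"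
      then have gD: "g \<in> D" and Ag: "A g = cscale (cnj lam) g"
        unfolding kernel_shift_def A_def using DA by blast+
      have relA: "\<forall>u\<in>D. cinner (A u) g = cnj lam * cinner u g"
      proof (cases "g = 0")
        case True then show ?thesis by simp
      next
        case False
        show ?thesis
        proof (rule ccontr)
          assume "\<not> ?thesis"
          then obtain u where u: "u \<in> D" "cinner (A u) g \<noteq> cnj lam * cinner u g" by blast
          obtain e where e: "e > 0" "\<forall>w. cmod w < e \<longrightarrow> (\<exists>y\<in>D. cnorm y = 1 \<and> cinner (A y) y = cnj lam + w)"
            using key_ball[OF linA gD False Ag u] by blast
          have "lam + w \<in> num_range D Z" if w: "cmod w < e" for w
          proof -
            obtain y where y: "y \<in> D" "cnorm y = 1" "cinner (A y) y = cnj lam + cnj w"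
              using e(2) w by (metis complex_mod_cnj)
            have "cinner (Z y) y = cinner y (A y)" using rel[OF y(1) y(1)] .
            also have "\<dots> = cnj (cinner (A y) y)" by (rule cinner_commute)
            also have "\<dots> = lam + w" using y(3) by simp
            finally show ?thesis using inW y by blast
          qed
          then show False using not_ball_in_range[OF fr e(1)] by blast
        qed
      qed
      have "Z g = cscale lam g"
      proof (rule dense_unique[OF dd], intro ballI)
        fix u assume u: "u \<in> D"
        have "cinner u (Z g) = cnj (cinner (Z g) u)" by (rule cinner_commute)
        also have "\<dots> = cnj (cinner g (A u))" using rel[OF gD u] by simp
        also have "\<dots> = cinner (A u) g" using cinner_commute[of "A u" g] by simp
        also have "\<dots> = cinner u (cscale lam g)" using relA u by (simp add: cinner_cscale_right)
        finally show "cinner u (Z g) = cinner u (cscale lam g)" .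
      qed
      then show "g \<in> kernel_shift D Z lam" using gD unfolding kernel_shift_def by blast
    qed
    show ?thesis unfolding normal_eigenvalue_def using eig part1 sup by blast
  qed
  show ?thesis using part1 part2 by blast
qed
end
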